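(* Assume $T_1\ge1$, $\eta_1\le\frac{1}{4k(T_1+1)}$, $0<r\le\frac{\eta_1}{200}$, and suppose that $\frac{k}{4d}\le|\mathcal{W}_0^+\cap\mathcal{A}^+|,\,|\mathcal{W}_0^-\cap\mathcal{A}^-|\le\frac{k}{d}$ and $|S_1^+|,|S_1^-|\ge\frac{m_1}{3}$. Define $z(x)\in\mathbb{R}^k$ by $z(x)_i=\max_j\sigma(w_i^{(T_1)}\cdot x[j])$, and define $v^*\in\mathbb{R}^k$ by $v^*_i=\frac{80d}{k\eta_1T_1}$ for $i\in\mathcal{W}_0^+\cap\mathcal{A}^+$, $v^*_i=-\frac{80d}{k\eta_1T_1}$ for $i\in\mathcal{W}_0^-\cap\mathcal{A}^-$, and $v^*_i=0$ otherwise. Then $y\,(v^*\cdot z(x))>1$ for every $(x,y)$ in the support of $\mathcal{D}$, and $\|v^*\|^2\le\frac{2\cdot 80^2\,d}{k\,\eta_1^2T_1^2}$.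
   Context: Fix $n\ge1$, $d\ge3$ and orthonormal $o_1,\dots,o_d\in\mathbb{R}^d$. Inputs are $x=(x[1],\dots,x[n])\in\mathbb{R}^{nd}$. The distribution $\mathcal{D}$ on $\mathbb{R}^{nd}\times\{\pm1\}$: $y$ uniform on $\{\pm1\}$; given $y=1$, an index $j_+$ uniform on $\{1,\dots,n\}$ is drawn, $x[j_+]=o_1$, and for $j\ne j_+$ independently $x[j]=o_{i_j}$ with $i_j$ uniform on $\{3,\dots,d\}$; given $y=-1$, the same with $o_2$ instead of $o_1$. Network $N_{(W,a)}(x)=\sum_{i=1}^k a_i\max_j\sigma(w_i\cdot x[j])$, $\sigma(z)=\max\{0,z\}$. Loss $\ell(z)=\log(1+e^{-z})$. $S_1$ is a finite set of $m_1$ samples from $\mathcal{D}$, $S_1^\pm=\{x:(x,\pm1)\in S_1\}$, $\mathcal{L}_1(W,a)=\frac1{m_1}\sum_{(x,y)\in S_1}\ell(yN_{(W,a)}(x))$. Initialization: $\|w_i^{(0)}\|=r$, $a_i^{(0)}\in\{\pm1\}$. Iterates $W^{(t)}=W^{(t-1)}-\eta_1\nabla_W\mathcal{L}_1(W^{(t-1)},a^{(0)})$, $t=1,\dots,T_1$, with gradient convention $\frac{\partial}{\partial w_i}\max_j\sigma(w_i\cdot x[j])=p_i(x)$, where $p_i(x)=x[j^*]$ for $j^*\in\arg\max_j w_i\cdot x[j]$ if $w_i\cdot x[j^*]>0$ and $0$ otherwise; $w_i^{(t)}$ is the $i$th row of $W^{(t)}$. Sets: $\mathcal{A}^\pm=\{i:a_i^{(0)}=\pm1\}$,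 $\mathcal{W}_0^+=\{i:\arg\max_{l\in\{1,3,\dots,d\}}w_i^{(0)}\cdot o_l=1,\ w_i^{(0)}\cdot o_1>0\}$, $\mathcal{W}_0^-=\{i:\arg\max_{l\in\{2,3,\dots,d\}}w_i^{(0)}\cdot o_l=2,\ w_i^{(0)}\cdot o_2>0\}$. *)

theory Defs
  imports "HOL-Analysis.Analysis"
begin

text \<open>Patches of an input are indexed by a finite type 'n (so n = CARD('n) >= 1);
  R^d is an abstract Euclidean space 'a with DIM('a) = d; neurons are indexed by 1..k.\<close>

definition relu :: "real \<Rightarrow> real" where
  "relu z = max 0 z"

definition logloss :: "real \<Rightarrow> real" where
  "logloss z = ln (1 + exp (- z))"

definition logloss' :: "real \<Rightarrow> real" where
  "logloss' z = - exp (- z) / (1 + exp (- z))"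

definition neuron :: "'a::real_inner \<Rightarrow> ('n::finite \<Rightarrow> 'a) \<Rightarrow> real" where
  "neuron w x = Max (range (\<lambda>j. relu (w \<bullet> x j)))"

definition net :: "nat \<Rightarrow> (nat \<Rightarrow> 'a::real_inner) \<Rightarrow> (nat \<Rightarrow> real) \<Rightarrow> ('n::finite \<Rightarrow> 'a) \<Rightarrow> real" where
  "net k W a x = (\<Sum>i\<in>{1..k}. a i * neuron (W i) x)"

definition loss1 :: "nat \<Rightarrow> (('n::finite \<Rightarrow> 'a::real_inner) \<times> real) set \<Rightarrow> (nat \<Rightarrow> 'a) \<Rightarrow> (nat \<Rightarrow> real) \<Rightarrow> real" where
  "loss1 k S W a = (1 / real (card S)) * (\<Sum>(x, y)\<in>S. logloss (y * net k W a x))"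

text \<open>Gradient convention: p_i(x) = x[j*] for the selected maximizer j* = sel w x, if
  w . x[j*] > 0, and 0 otherwise.  The selection function sel is an arbitrary tie-breaking rule.\<close>
definition pgrad :: "('a::real_inner \<Rightarrow> ('n::finite \<Rightarrow> 'a) \<Rightarrow> 'n) \<Rightarrow> 'a \<Rightarrow> ('n \<Rightarrow> 'a) \<Rightarrow> 'a" where
  "pgrad sel w x = (if w \<bullet> x (sel w x) > 0 then x (sel w x) else 0)"

definition grad1 :: "('a::real_inner \<Rightarrow> ('n::finite \<Rightarrow> 'a) \<Rightarrow> 'n) \<Rightarrow> nat \<Rightarrow> (('n \<Rightarrow> 'a) \<times> real) set
    \<Rightarrow> (nat \<Rightarrow> 'a) \<Rightarrow> (nat \<Rightarrow> real) \<Rightarrow> nat \<Rightarrow> 'a" where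
  "grad1 sel k S W a i = (1 / real (card S)) *\<^sub>R
      (\<Sum>(x, y)\<in>S. (logloss' (y * net k W a x) * y * a i) *\<^sub>R pgrad sel (W i) x)"

fun gd :: "('a::real_inner \<Rightarrow> ('n::finite \<Rightarrow> 'a) \<Rightarrow> 'n) \<Rightarrow> nat \<Rightarrow> (('n \<Rightarrow> 'a) \<times> real) set
    \<Rightarrow> real \<Rightarrow> (nat \<Rightarrow> 'a) \<Rightarrow> (nat \<Rightarrow> real) \<Rightarrow> nat \<Rightarrow> (nat \<Rightarrow> 'a)" where
  "gd sel k S eta W0 a 0 = W0"
| "gd sel k S eta W0 a (Suc t) =
     (\<lambda>i. gd sel k S eta W0 a t i - eta *\<^sub>R grad1 sel k S (gd sel k S eta W0 a t) a i)"

definition supportD :: "(nat \<Rightarrow> 'a) \<Rightarrow> nat \<Rightarrow> (('n \<Rightarrow> 'a) \<times> real) set" where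
  "supportD ob d = {(x, y).
     (y = 1 \<and> (\<exists>jp. x jp = ob 1 \<and> (\<forall>j. j \<noteq> jp \<longrightarrow> x j \<in> ob ` {3..d}))) \<or>
     (y = -1 \<and> (\<exists>jp. x jp = ob 2 \<and> (\<forall>j. j \<noteq> jp \<longrightarrow> x j \<in> ob ` {3..d})))}"

definition Aset :: "nat \<Rightarrow> (nat \<Rightarrow> real) \<Rightarrow> real \<Rightarrow> nat set" where
  "Aset k a s = {i\<in>{1..k}. a i = s}"

text \<open>W_0^+ (with c = 1) and W_0^- (with c = 2): argmax over l in {c,3,...,d} of w_i . o_l is
  (uniquely) c, and w_i . o_c > 0.\<close>
definition W0set :: "nat \<Rightarrow> (nat \<Rightarrow> 'a::real_inner) \<Rightarrow> nat \<Rightarrow> (nat \<Rightarrow> 'a) \<Rightarrow> nat \<Rightarrow> nat set" where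
  "W0set k W d ob c = {i\<in>{1..k}. (\<forall>l\<in>{3..d}. W i \<bullet> ob l < W i \<bullet> ob c) \<and> W i \<bullet> ob c > 0}"

definition vstar :: "nat \<Rightarrow> nat \<Rightarrow> real \<Rightarrow> nat \<Rightarrow> nat set \<Rightarrow> nat set \<Rightarrow> nat \<Rightarrow> real" where
  "vstar k d eta T Iplus Iminus i =
     (if i \<in> Iplus then 80 * d / (k * eta * T) else if i \<in> Iminus then - (80 * d / (k * eta * T)) else 0)"

end

theory Submission
  imports Defs
begin

locale setting =
  fixes ob :: "nat \<Rightarrow> 'a::euclidean_space"
    and d k T1 :: nat
    and S1 :: "(('n::finite \<Rightarrow> 'a) \<times> real) set"
    and sel :: "'a \<Rightarrow> ('n \<Rightarrow> 'a) \<Rightarrow> 'n"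
    and W0 :: "nat \<Rightarrow> 'a" and a :: "nat \<Rightarrow> real"
    and eta1 r :: real
  assumes d3: "d \<ge> 3"
    and orth: "\<forall>i\<in>{1..d}. \<forall>j\<in>{1..d}. ob i \<bullet> ob j = (if i = j then 1 else 0)"
    and sel_max: "\<forall>w x j. w \<bullet> x j \<le> w \<bullet> x (sel w x)"
    and S1_fin: "finite S1" and S1_ne: "S1 \<noteq> {}" and S1_supp: "S1 \<subseteq> supportD ob d"
    and init_norm: "\<forall>i\<in>{1..k}. norm (W0 i) = r"
    and init_a: "\<forall>i\<in>{1..k}. a i = 1 \<or> a i = -1"
    and T1: "T1 \<ge> 1"
    and eta1: "eta1 \<le> 1 / (4 * real k * (real T1 + 1))"
    and r: "0 < r" "r \<le> eta1 / 200"
begin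

abbreviation "W \<equiv> gd sel k S1 eta1 W0 a"
definition "G t x y = - logloss' (y * net k (W t) a x)"
definition "m = real (card S1)"

lemma eta_pos: "eta1 > 0" using r by linarith

lemma k_pos: "k > 0"
proof (rule ccontr)
  assume "\<not> k > 0" then have "k = 0" by simp
  then show False using eta1 eta_pos by simp
qed

lemma m_pos: "m > 0" unfolding m_def using S1_fin S1_ne by (simp add: card_gt_0_iff)

lemma eta_k: "eta1 * (real k * (real T1 + 1)) \<le> 1/4"
proof -
  have p: "4 * real k * (real T1 + 1) > 0" using k_pos by simp
  have "eta1 * (4 * real k * (real T1 + 1)) \<le> 1" using eta1 p by (simp add: pos_le_divide_eq)
  then show ?thesis by simp
qed

lemma ob_inner: "i \<in> {1..d} \<Longrightarrow> j \<in> {1..d} \<Longrightarrow> ob i \<bullet> ob j = (if i = j then 1 else 0)"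
  using orth by blast

lemma ob_norm: "l \<in> {1..d} \<Longrightarrow> norm (ob l) = 1"
  using ob_inner[of l l] by (simp add: norm_eq_sqrt_inner)

definition cy :: "real \<Rightarrow> nat" where "cy y = (if y = 1 then 1 else 2)"

lemma supp_struct:
  assumes "(x, y) \<in> supportD ob d"
  shows "(y = 1 \<or> y = -1) \<and> (\<exists>jp. x jp = ob (cy y) \<and> (\<forall>j. j \<noteq> jp \<longrightarrow> x j \<in> ob ` {3..d}))"
  using assms unfolding supportD_def cy_def by auto

lemma supp_range:
  assumes "(x, y) \<in> supportD ob d"
  shows "x j \<in> ob ` {1..d}"
proof -
  obtain jp where jp: "x jp = ob (cy y)" "\<forall>j. j \<noteq> jp \<longrightarrow> x j \<in> ob ` {3..d}"
    using supp_struct[OF assms] by blast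
  show ?thesis
  proof (cases "j = jp")
    case True then show ?thesis using jp d3 unfolding cy_def by auto
  next
    case False then show ?thesis using jp by auto
  qed
qed

lemma supp_norm: "(x, y) \<in> supportD ob d \<Longrightarrow> norm (x j) = 1"
proof -
  assume "(x, y) \<in> supportD ob d"
  from supp_range[OF this, of j] obtain q where "q \<in> {1..d}" "x j = ob q" by auto
  then show ?thesis using ob_norm by simp
qed

lemma pgrad_cases: "pgrad sel w x = 0 \<or> pgrad sel w x \<in> range x"
  unfolding pgrad_def by auto

lemma pgrad_norm: "(x, y) \<in> supportD ob d \<Longrightarrow> norm (pgrad sel w x) \<le> 1"
  using pgrad_cases[of w x] supp_norm by fastforce

lemma pgrad_nonneg: "(x, y) \<in> supportD ob d \<Longrightarrow> l \<in> {1..d} \<Longrightarrow> pgrad sel w x \<bullet> ob l \<ge> 0"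
proof -
  assume s: "(x, y) \<in> supportD ob d" and l: "l \<in> {1..d}"
  show ?thesis
  proof (cases "pgrad sel w x = 0")
    case False
    then obtain j where "pgrad sel w x = x j" using pgrad_cases[of w x] by auto
    moreover obtain q where "q \<in> {1..d}" "x j = ob q" using supp_range[OF s, of j] by auto
    ultimately show ?thesis using ob_inner[of q l] l by simp
  qed simp
qed

lemma step_inner:
  "W (Suc t) i \<bullet> v = W t i \<bullet> v + eta1 / m *
     (\<Sum>(x, y)\<in>S1. G t x y * y * a i * (pgrad sel (W t i) x \<bullet> v))"
  by (simp add: grad1_def G_def m_def inner_diff_left inner_sum_left case_prod_beta
       sum_negf algebra_simps)

lemma logloss'_abs: "\<bar>logloss' z\<bar> \<le> 1"
proof -
  have ep: "exp (-z) > 0" by simp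
  have p: "1 + exp (-z) > 0" using ep by linarith
  have "exp (-z) / (1 + exp (-z)) \<le> 1" using p by (simp add: divide_le_eq)
  moreover have "\<bar>logloss' z\<bar> = exp (-z) / (1 + exp (-z))" unfolding logloss'_def
    using ep by (simp add: abs_div_pos)
  ultimately show ?thesis by simp
qed

lemma a_abs: "i \<in> {1..k} \<Longrightarrow> \<bar>a i\<bar> = 1"
proof -
  assume "i \<in> {1..k}" then have "a i = 1 \<or> a i = -1" using init_a by blast
  then show ?thesis by auto
qed

lemma grad_norm:
  assumes i: "i \<in> {1..k}"
  shows "norm (grad1 sel k S1 V a i) \<le> 1"
proof -
  define f where "f = (\<lambda>p. (logloss' (snd p * net k V a (fst p)) * snd p * a i) *\<^sub>R pgrad sel (V i) (fst p))"
  have g: "grad1 sel k S1 V a i = (1 / m) *\<^sub>R sum f S1"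
    unfolding grad1_def f_def m_def by (simp add: case_prod_beta)
  have "norm (sum f S1) \<le> (\<Sum>p\<in>S1. norm (f p))" by (rule norm_sum)
  also have "\<dots> \<le> (\<Sum>p\<in>S1. 1)"
  proof (rule sum_mono)
    fix p assume p: "p \<in> S1"
    obtain x y where xy: "p = (x, y)" by fastforce
    have s: "(x, y) \<in> supportD ob d" using p xy S1_supp by auto
    have y: "\<bar>y\<bar> = 1" using supp_struct[OF s] by auto
    have "norm (f p)
        = \<bar>logloss' (y * net k V a x)\<bar> * \<bar>y\<bar> * \<bar>a i\<bar> * norm (pgrad sel (V i) x)"
      unfolding f_def xy by (simp add: abs_mult)
    also have "\<dots> \<le> 1 * 1 * 1 * 1"
      using logloss'_abs y a_abs[OF i] pgrad_norm[OF s]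
      by (intro mult_mono) auto
    finally show "norm (f p) \<le> 1" by simp
  qed
  also have "\<dots> = m" unfolding m_def by simp
  finally have "norm (sum f S1) \<le> m" .
  then show ?thesis unfolding g using m_pos by (simp add: divide_simps)
qed

lemma W_norm: "i \<in> {1..k} \<Longrightarrow> norm (W t i) \<le> r + eta1 * t"
proof (induction t)
  case 0 then show ?case using init_norm by simp
next
  case (Suc t)
  have "norm (W (Suc t) i) \<le> norm (W t i) + norm (eta1 *\<^sub>R grad1 sel k S1 (W t) a i)"
    by (simp only: gd.simps) (rule norm_triangle_ineq4)
  also have "norm (eta1 *\<^sub>R grad1 sel k S1 (W t) a i) \<le> eta1"
    using grad_norm[OF Suc.prems] eta_pos by (simp add: mult_left_le)
  finally show ?case using Suc by (simp add: algebra_simps)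
qed

lemma neuron_ge: "relu (w \<bullet> x j) \<le> neuron w x"
  unfolding neuron_def by (rule Max_ge) auto

lemma neuron_le: "(\<And>j. relu (w \<bullet> x j) \<le> B) \<Longrightarrow> neuron w x \<le> B"
  unfolding neuron_def by (subst Max_le_iff) auto

lemma neuron_nonneg: "neuron w x \<ge> 0"
  using neuron_ge[of w x undefined] unfolding relu_def by linarith

lemma neuron_norm:
  assumes "(x, y) \<in> supportD ob d" shows "neuron w x \<le> norm w"
proof (rule neuron_le)
  fix j
  have "w \<bullet> x j \<le> norm w * norm (x j)" by (rule norm_cauchy_schwarz)
  then show "relu (w \<bullet> x j) \<le> norm w" using supp_norm[OF assms] unfolding relu_def by simp
qed

lemma net_bound:
  assumes s: "(x, y) \<in> supportD ob d" and t: "t < T1"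
  shows "\<bar>net k (W t) a x\<bar> \<le> 1/4"
proof -
  have "\<bar>net k (W t) a x\<bar> \<le> (\<Sum>i\<in>{1..k}. \<bar>a i * neuron (W t i) x\<bar>)"
    unfolding net_def by (rule sum_abs)
  also have "\<dots> \<le> (\<Sum>i\<in>{1..k}. r + eta1 * T1)"
  proof (rule sum_mono)
    fix i assume i: "i \<in> {1..k}"
    have "\<bar>a i * neuron (W t i) x\<bar> = neuron (W t i) x"
      using a_abs[OF i] abs_of_nonneg[OF neuron_nonneg] by (simp add: abs_mult)
    also have "\<dots> \<le> r + eta1 * t" using neuron_norm[OF s] W_norm[OF i] order_trans by blast
    also have "\<dots> \<le> r + eta1 * T1" using t eta_pos by simp
    finally show "\<bar>a i * neuron (W t i) x\<bar> \<le> r + eta1 * T1" .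
  qed
  also have "\<dots> = k * (r + eta1 * T1)" by simp
  also have "\<dots> \<le> k * (eta1 * (T1 + 1))"
  proof -
    have "r + eta1 * T1 \<le> eta1 * (T1 + 1)" using r eta_pos by (simp add: distrib_left)
    then show ?thesis by (intro mult_left_mono) auto
  qed
  also have "\<dots> \<le> 1/4" using eta_k by (simp add: algebra_simps)
  finally show ?thesis .
qed

lemma G_bounds:
  assumes s: "(x, y) \<in> supportD ob d" and t: "t < T1"
  shows "1/4 \<le> G t x y" "G t x y \<le> 1"
proof -
  define z where "z = y * net k (W t) a x"
  have y: "\<bar>y\<bar> = 1" using supp_struct[OF s] by auto
  have zb: "\<bar>z\<bar> \<le> 1/4" using net_bound[OF s t] y unfolding z_def by (simp add: abs_mult)
  have e: "exp (-z) \<ge> 1 - z" using exp_ge_add_one_self[of "-z"] by simp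
  have ep: "exp (-z) > 0" by simp
  have G: "G t x y = exp (-z) / (1 + exp (-z))" unfolding G_def logloss'_def z_def by simp
  have "3 * exp (-z) \<ge> 1" using e zb by (simp add: abs_le_iff)
  moreover have "1 + exp (-z) > 0" using ep by linarith
  ultimately show "1/4 \<le> G t x y" unfolding G by (simp add: divide_simps)
  have "1 + exp (-z) > 0" using ep by linarith
  then show "G t x y \<le> 1" unfolding G by (simp add: divide_le_eq)
qed

definition sg :: "nat \<Rightarrow> real" where "sg c = (if c = 1 then 1 else -1)"

lemma cy_sg: "(y = 1 \<or> y = -1) \<Longrightarrow> (c = 1 \<or> c = 2) \<Longrightarrow> (cy y = c) = (y = sg c)"
  unfolding cy_def sg_def by auto

lemma pgrad_pos:
  assumes s: "(x, y) \<in> supportD ob d" and c: "cy y = c"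
    and wp: "w \<bullet> ob c > 0" and lt: "\<forall>l\<in>{3..d}. w \<bullet> ob l < w \<bullet> ob c"
  shows "pgrad sel w x = ob c"
proof -
  obtain jp where jp: "x jp = ob (cy y)" "\<forall>j. j \<noteq> jp \<longrightarrow> x j \<in> ob ` {3..d}"
    using supp_struct[OF s] by blast
  have ge: "w \<bullet> x jp \<le> w \<bullet> x (sel w x)" using sel_max by blast
  have "sel w x = jp"
  proof (rule ccontr)
    assume "sel w x \<noteq> jp"
    then obtain l where "l \<in> {3..d}" "x (sel w x) = ob l" using jp by blast
    then show False using ge jp c lt by fastforce
  qed
  then show ?thesis unfolding pgrad_def using jp c wp by simp
qed

lemma pgrad_zero:
  assumes s: "(x, y) \<in> supportD ob d" and c: "c = 1 \<or> c = 2" and ne: "cy y \<noteq> c"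
  shows "pgrad sel w x \<bullet> ob c = 0"
proof -
  obtain jp where jp: "x jp = ob (cy y)" "\<forall>j. j \<noteq> jp \<longrightarrow> x j \<in> ob ` {3..d}"
    using supp_struct[OF s] by blast
  have cyd: "cy y \<in> {1..d}" using d3 unfolding cy_def by auto
  have cd: "c \<in> {1..d}" using d3 c by auto
  have xj: "x j \<bullet> ob c = 0" for j
  proof (cases "j = jp")
    case True then show ?thesis using jp ob_inner[OF cyd cd] ne by simp
  next
    case False
    then obtain l where "l \<in> {3..d}" "x j = ob l" using jp by blast
    then show ?thesis using ob_inner[of l c] cd c by auto
  qed
  show ?thesis using pgrad_cases[of w x] xj by auto
qed

lemma G_nonneg: "G t x y \<ge> 0"
  unfolding G_def logloss'_def by (simp add: add_pos_pos less_imp_le)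

lemma card_sg: "card {p \<in> S1. snd p = s} = card {x. (x, s) \<in> S1}"
proof -
  have "{p \<in> S1. snd p = s} = (\<lambda>x. (x, s)) ` {x. (x, s) \<in> S1}" by force
  moreover have "inj_on (\<lambda>x. (x, s)) {x. (x, s) \<in> S1}" by (auto simp: inj_on_def)
  ultimately show ?thesis by (simp add: card_image)
qed

lemma invariant:
  assumes c: "c = 1 \<or> c = 2" and i: "i \<in> {1..k}" and ai: "a i = sg c"
   and pos: "W0 i \<bullet> ob c > 0" and lt: "\<forall>l\<in>{3..d}. W0 i \<bullet> ob l < W0 i \<bullet> ob c"
   and crd: "real (card {x. (x, sg c) \<in> S1}) \<ge> m / 3"
  shows "t \<le> T1 \<Longrightarrow> W t i \<bullet> ob c \<ge> W0 i \<bullet> ob c + eta1 * t / 12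
     \<and> (\<forall>l\<in>{1..d}. l \<noteq> c \<longrightarrow> W t i \<bullet> ob l \<le> W0 i \<bullet> ob l)"
proof (induction t)
  case 0 then show ?case by simp
next
  case (Suc t)
  then have t: "t < T1" by simp
  from Suc have IH1: "W t i \<bullet> ob c \<ge> W0 i \<bullet> ob c + eta1 * t / 12"
    and IH2: "\<forall>l\<in>{1..d}. l \<noteq> c \<longrightarrow> W t i \<bullet> ob l \<le> W0 i \<bullet> ob l" by auto
  have nn: "eta1 * t / 12 \<ge> 0" using eta_pos by simp
  have wp: "W t i \<bullet> ob c > 0" using IH1 pos nn by linarith
  have wlt: "\<forall>l\<in>{3..d}. W t i \<bullet> ob l < W t i \<bullet> ob c"
  proof
    fix l assume l: "l \<in> {3..d}"
    then have "l \<in> {1..d}" "l \<noteq> c" using c by auto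
    then have "W t i \<bullet> ob l \<le> W0 i \<bullet> ob l" using IH2 by blast
    then show "W t i \<bullet> ob l < W t i \<bullet> ob c" using lt l IH1 nn by fastforce
  qed
  have cd: "c \<in> {1..d}" using d3 c by auto
  have sgsq: "sg c * sg c = 1" unfolding sg_def by simp
  have sum1: "(\<Sum>(x, y)\<in>S1. G t x y * y * a i * (pgrad sel (W t i) x \<bullet> ob c)) \<ge> m / 12"
  proof -
    have "(\<Sum>p\<in>S1. (if snd p = sg c then 1/4 else 0)) \<le>
          (\<Sum>(x, y)\<in>S1. G t x y * y * a i * (pgrad sel (W t i) x \<bullet> ob c))"
      unfolding case_prod_beta
    proof (rule sum_mono)
      fix p assume p: "p \<in> S1"
      obtain x y where xy: "p = (x, y)" by fastforce
      have s: "(x, y) \<in> supportD ob d" using p xy S1_supp by auto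
      have y: "y = 1 \<or> y = -1" using supp_struct[OF s] by auto
      show "(if snd p = sg c then 1/4 else 0) \<le> G t (fst p) (snd p) * snd p * a i * (pgrad sel (W t i) (fst p) \<bullet> ob c)"
      proof (cases "y = sg c")
        case True
        then have "cy y = c" using cy_sg[OF y c] by simp
        then have "pgrad sel (W t i) x = ob c" using pgrad_pos[OF s _ wp wlt] by simp
        moreover have ya: "y * a i = 1" using True ai sgsq by simp
        have "1/4 \<le> G t x y * (y * a i) * (pgrad sel (W t i) x \<bullet> ob c)"
          unfolding ya using calculation ob_inner[OF cd cd] G_bounds(1)[OF s t] by simp
        then show ?thesis using True xy by (simp add: mult.assoc)
      next
        case False
        then have "cy y \<noteq> c" using cy_sg[OF y c] by simp
        then show ?thesis using False xy pgrad_zero[OF s c] by simp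
      qed
    qed
    moreover have "(\<Sum>p\<in>S1. (if snd p = sg c then 1/4 else 0)) = (1/4) * card {p \<in> S1. snd p = sg c}"
      using sum.inter_filter[OF S1_fin, of "\<lambda>_. 1/4::real" "\<lambda>p. snd p = sg c"] by simp
    ultimately show ?thesis using crd card_sg by simp
  qed
  have A: "W (Suc t) i \<bullet> ob c \<ge> W0 i \<bullet> ob c + eta1 * Suc t / 12"
  proof -
    have "eta1 / m * (m / 12) \<le> eta1 / m *
       (\<Sum>(x, y)\<in>S1. G t x y * y * a i * (pgrad sel (W t i) x \<bullet> ob c))"
      using sum1 eta_pos m_pos by (intro mult_left_mono) auto
    moreover have "eta1 / m * (m / 12) = eta1 / 12" using m_pos by simp
    moreover have "eta1 * real (Suc t) / 12 = eta1 * real t / 12 + eta1 / 12" by (simp add: algebra_simps)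
    ultimately show ?thesis using step_inner[of t i "ob c"] IH1 by linarith
  qed
  have B: "\<forall>l\<in>{1..d}. l \<noteq> c \<longrightarrow> W (Suc t) i \<bullet> ob l \<le> W0 i \<bullet> ob l"
  proof (intro ballI impI)
    fix l assume l: "l \<in> {1..d}" and lc: "l \<noteq> c"
    have "(\<Sum>(x, y)\<in>S1. G t x y * y * a i * (pgrad sel (W t i) x \<bullet> ob l)) \<le> (\<Sum>p\<in>S1. 0)"
      unfolding case_prod_beta
    proof (rule sum_mono)
      fix p assume p: "p \<in> S1"
      obtain x y where xy: "p = (x, y)" by fastforce
      have s: "(x, y) \<in> supportD ob d" using p xy S1_supp by auto
      have y: "y = 1 \<or> y = -1" using supp_struct[OF s] by auto
      show "G t (fst p) (snd p) * snd p * a i * (pgrad sel (W t i) (fst p) \<bullet> ob l) \<le> 0"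
      proof (cases "y = sg c")
        case True
        then have "cy y = c" using cy_sg[OF y c] by simp
        then have "pgrad sel (W t i) x = ob c" using pgrad_pos[OF s _ wp wlt] by simp
        then show ?thesis using xy ob_inner[OF cd l] lc by simp
      next
        case False
        then have ym: "y * a i = -1" using y ai unfolding sg_def by (auto split: if_splits)
        have "G t x y * (y * a i) * (pgrad sel (W t i) x \<bullet> ob l) \<le> 0"
          unfolding ym using mult_nonneg_nonneg[OF G_nonneg pgrad_nonneg[OF s l]] by simp
        then show ?thesis using xy by (simp add: mult.assoc)
      qed
    qed
    then have neg: "eta1 / m * (\<Sum>(x, y)\<in>S1. G t x y * y * a i * (pgrad sel (W t i) x \<bullet> ob l)) \<le> 0"
      using eta_pos m_pos by (intro mult_nonneg_nonpos) simp_all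
    show "W (Suc t) i \<bullet> ob l \<le> W0 i \<bullet> ob l"
    proof -
      have "W t i \<bullet> ob l \<le> W0 i \<bullet> ob l" using IH2 l lc by blast
      then show ?thesis using step_inner[of t i "ob l"] neg by linarith
    qed
  qed
  show ?case using A B by blast
qed

definition Pc :: "nat \<Rightarrow> nat set" where "Pc c = W0set k W0 d ob c \<inter> Aset k a (sg c)"

lemma Pc_sub: "Pc c \<subseteq> {1..k}" unfolding Pc_def W0set_def by auto

lemma Pc_fin: "finite (Pc c)" using Pc_sub finite_subset by blast

lemma Pc_mem: "i \<in> Pc c \<Longrightarrow> i \<in> {1..k} \<and> a i = sg c \<and> W0 i \<bullet> ob c > 0 \<and> (\<forall>l\<in>{3..d}. W0 i \<bullet> ob l < W0 i \<bullet> ob c)"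
  unfolding Pc_def W0set_def Aset_def by auto

lemma lower_neuron:
  assumes c: "c = 1 \<or> c = 2" and i: "i \<in> Pc c"
    and crd: "real (card {x. (x, sg c) \<in> S1}) \<ge> m / 3"
    and s: "(x, y) \<in> supportD ob d" and cyc: "cy y = c"
  shows "neuron (W T1 i) x \<ge> eta1 * T1 / 12"
proof -
  note pm = Pc_mem[OF i]
  have inv: "W T1 i \<bullet> ob c \<ge> W0 i \<bullet> ob c + eta1 * T1 / 12"
    using invariant[OF c _ _ _ _ crd, of i T1] pm by blast
  obtain jp where jp: "x jp = ob (cy y)" using supp_struct[OF s] by blast
  have "W T1 i \<bullet> ob c \<le> relu (W T1 i \<bullet> x jp)" using jp cyc unfolding relu_def by simp
  also have "\<dots> \<le> neuron (W T1 i) x" by (rule neuron_ge)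
  finally show ?thesis using inv pm by linarith
qed

lemma upper_neuron:
  assumes c: "c = 1 \<or> c = 2" and c': "c' = 1 \<or> c' = 2" and cc: "c \<noteq> c'" and i: "i \<in> Pc c'"
    and crd: "real (card {x. (x, sg c') \<in> S1}) \<ge> m / 3"
    and s: "(x, y) \<in> supportD ob d" and cyc: "cy y = c"
  shows "neuron (W T1 i) x \<le> r"
proof (rule neuron_le)
  fix j
  note pm = Pc_mem[OF i]
  have inv: "\<forall>l\<in>{1..d}. l \<noteq> c' \<longrightarrow> W T1 i \<bullet> ob l \<le> W0 i \<bullet> ob l"
    using invariant[OF c' _ _ _ _ crd, of i T1] pm by blast
  obtain jp where jp: "x jp = ob (cy y)" "\<forall>j. j \<noteq> jp \<longrightarrow> x j \<in> ob ` {3..d}"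
    using supp_struct[OF s] by blast
  obtain l where l: "l \<in> {1..d}" "l \<noteq> c'" "x j = ob l"
  proof (cases "j = jp")
    case True then show ?thesis using that[of c] jp cyc c cc d3 by auto
  next
    case False
    then obtain l where "l \<in> {3..d}" "x j = ob l" using jp by blast
    then show ?thesis using that[of l] c' by auto
  qed
  have "W T1 i \<bullet> x j \<le> W0 i \<bullet> ob l" using inv l by auto
  also have "\<dots> \<le> norm (W0 i) * norm (ob l)" by (rule norm_cauchy_schwarz)
  also have "\<dots> = r" using init_norm pm ob_norm[OF l(1)] by simp
  finally show "relu (W T1 i \<bullet> x j) \<le> r" using r unfolding relu_def by simp
qed

lemma Pc_disj: "Pc 1 \<inter> Pc 2 = {}"
  using Pc_mem[of _ 1] Pc_mem[of _ 2] unfolding sg_def by force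

lemma sum_Pc: "(\<Sum>i\<in>{1..k}. if i \<in> Pc c then g i else 0) = (\<Sum>i\<in>Pc c. g i)"
  by (metis (no_types) Int_absorb1 Pc_sub finite_atLeastAtMost sum.inter_restrict)

lemma vsum:
  fixes f :: "nat \<Rightarrow> real"
  shows "(\<Sum>i\<in>{1..k}. vstar k d eta1 T1 (Pc 1) (Pc 2) i * f i)
     = 80 * real d / (real k * eta1 * real T1) * (\<Sum>i\<in>Pc 1. f i)
       - 80 * real d / (real k * eta1 * real T1) * (\<Sum>i\<in>Pc 2. f i)"
proof -
  define V where "V = 80 * real d / (real k * eta1 * real T1)"
  have e: "vstar k d eta1 T1 (Pc 1) (Pc 2) i * f i
     = (if i \<in> Pc 1 then V * f i else 0) + (if i \<in> Pc 2 then - (V * f i) else 0)" for i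
    using Pc_disj unfolding vstar_def V_def by auto
  have "(\<Sum>i\<in>{1..k}. vstar k d eta1 T1 (Pc 1) (Pc 2) i * f i)
     = (\<Sum>i\<in>{1..k}. (if i \<in> Pc 1 then V * f i else 0)) + (\<Sum>i\<in>{1..k}. (if i \<in> Pc 2 then - (V * f i) else 0))"
    unfolding e by (rule sum.distrib)
  also have "\<dots> = (\<Sum>i\<in>Pc 1. V * f i) + (\<Sum>i\<in>Pc 2. - (V * f i))"
    by (simp only: sum_Pc)
  finally show ?thesis unfolding V_def by (simp add: sum_distrib_left sum_negf)
qed

lemma vsq:
  shows "(\<Sum>i\<in>{1..k}. (vstar k d eta1 T1 (Pc 1) (Pc 2) i)^2)
     = (80 * real d / (real k * eta1 * real T1))^2 * (card (Pc 1) + card (Pc 2))"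
proof -
  define V where "V = 80 * real d / (real k * eta1 * real T1)"
  have e: "(vstar k d eta1 T1 (Pc 1) (Pc 2) i)^2
     = (if i \<in> Pc 1 then V^2 else 0) + (if i \<in> Pc 2 then V^2 else 0)" for i
    using Pc_disj unfolding vstar_def V_def by auto
  have "(\<Sum>i\<in>{1..k}. (vstar k d eta1 T1 (Pc 1) (Pc 2) i)^2)
     = (\<Sum>i\<in>{1..k}. (if i \<in> Pc 1 then V^2 else 0)) + (\<Sum>i\<in>{1..k}. (if i \<in> Pc 2 then V^2 else 0))"
    unfolding e by (rule sum.distrib)
  also have "\<dots> = (\<Sum>i\<in>Pc 1. V^2) + (\<Sum>i\<in>Pc 2. V^2)"
    by (simp only: sum_Pc)
  finally show ?thesis unfolding V_def by (simp add: algebra_simps)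
qed

lemma margin:
  assumes c: "c = 1 \<or> c = 2" and c': "c' = 1 \<or> c' = 2" and cc: "c \<noteq> c'"
    and crd: "real (card {x. (x, sg c) \<in> S1}) \<ge> m / 3"
    and crd': "real (card {x. (x, sg c') \<in> S1}) \<ge> m / 3"
    and cl: "real k / (4 * real d) \<le> real (card (Pc c))"
    and cu: "real (card (Pc c')) \<le> real k / real d"
    and s: "(x, y) \<in> supportD ob d" and cyc: "cy y = c"
  shows "80 * real d / (real k * eta1 * real T1) * (\<Sum>i\<in>Pc c. neuron (W T1 i) x)
       - 80 * real d / (real k * eta1 * real T1) * (\<Sum>i\<in>Pc c'. neuron (W T1 i) x) > 1"
proof -
  define V where "V = 80 * real d / (real k * eta1 * real T1)"
  have dpos: "real d > 0" using d3 by simp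
  have kpos: "real k > 0" using k_pos by simp
  have Tpos: "real T1 \<ge> 1" using T1 by simp
  have Vpos: "V > 0" unfolding V_def using dpos kpos eta_pos Tpos by simp
  have A: "(\<Sum>i\<in>Pc c. neuron (W T1 i) x) \<ge> card (Pc c) * (eta1 * T1 / 12)"
  proof -
    have "(\<Sum>i\<in>Pc c. eta1 * T1 / 12) \<le> (\<Sum>i\<in>Pc c. neuron (W T1 i) x)"
      using lower_neuron[OF c _ crd s cyc] by (intro sum_mono) auto
    then show ?thesis by simp
  qed
  have B: "(\<Sum>i\<in>Pc c'. neuron (W T1 i) x) \<le> card (Pc c') * r"
  proof -
    have "(\<Sum>i\<in>Pc c'. neuron (W T1 i) x) \<le> (\<Sum>i\<in>Pc c'. r)"
      using upper_neuron[OF c c' cc _ crd' s cyc] by (intro sum_mono) auto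
    then show ?thesis by simp
  qed
  have A2: "card (Pc c) * (eta1 * T1 / 12) \<ge> real k / (4 * real d) * (eta1 * T1 / 12)"
    using cl eta_pos Tpos by (intro mult_right_mono) auto
  have B2: "card (Pc c') * r \<le> real k / real d * r"
    using cu r by (intro mult_right_mono) auto
  have VA: "V * (real k / (4 * real d) * (eta1 * T1 / 12)) = 5/3"
    unfolding V_def using dpos kpos eta_pos Tpos by (simp add: field_simps)
  have VB: "V * (real k / real d * r) \<le> 2/5"
  proof -
    have "V * (real k / real d * r) = 80 * r / (eta1 * T1)"
      unfolding V_def using dpos kpos eta_pos Tpos by (simp add: field_simps)
    also have "\<dots> \<le> 2/5"
    proof -
      have "80 * r * 5 \<le> 2 * eta1" using r by simp
      also have "\<dots> \<le> 2 * (eta1 * T1)" using eta_pos Tpos by simp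
      finally show ?thesis using eta_pos Tpos by (simp add: divide_simps)
    qed
    finally show ?thesis .
  qed
  have "V * (real k / (4 * real d) * (eta1 * T1 / 12)) \<le> V * (\<Sum>i\<in>Pc c. neuron (W T1 i) x)"
    using Vpos by (intro mult_left_mono[OF order_trans[OF A2 A]]) simp
  then have "V * (\<Sum>i\<in>Pc c. neuron (W T1 i) x) \<ge> 5/3" using VA by linarith
  moreover have "V * (\<Sum>i\<in>Pc c'. neuron (W T1 i) x) \<le> V * (real k / real d * r)"
    using Vpos by (intro mult_left_mono[OF order_trans[OF B B2]]) simp
  then have "V * (\<Sum>i\<in>Pc c'. neuron (W T1 i) x) \<le> 2/5" using VB by linarith
  ultimately show ?thesis unfolding V_def[symmetric] by linarith
qed

end
theorem mainTheorem9:
  fixes ob :: "nat \<Rightarrow> 'a::euclidean_space"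
    and d k T1 :: nat
    and S1 :: "(('n::finite \<Rightarrow> 'a) \<times> real) set"
    and sel :: "'a \<Rightarrow> ('n \<Rightarrow> 'a) \<Rightarrow> 'n"
    and W0 :: "nat \<Rightarrow> 'a" and a :: "nat \<Rightarrow> real"
    and eta1 r :: real
  assumes d_def: "d = DIM('a)" and d3: "d \<ge> 3"
    and orth: "\<forall>i\<in>{1..d}. \<forall>j\<in>{1..d}. ob i \<bullet> ob j = (if i = j then 1 else 0)"
    and sel_max: "\<forall>w x j. w \<bullet> x j \<le> w \<bullet> x (sel w x)"
    and S1_fin: "finite S1" and S1_ne: "S1 \<noteq> {}" and S1_supp: "S1 \<subseteq> supportD ob d"
    and init_norm: "\<forall>i\<in>{1..k}. norm (W0 i) = r"
    and init_a: "\<forall>i\<in>{1..k}. a i = 1 \<or> a i = -1"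
    and T1: "T1 \<ge> 1"
    and eta1: "eta1 \<le> 1 / (4 * real k * (real T1 + 1))"
    and r: "0 < r" "r \<le> eta1 / 200"
    and cardp: "real k / (4 * real d) \<le> real (card (W0set k W0 d ob 1 \<inter> Aset k a 1))"
               "real (card (W0set k W0 d ob 1 \<inter> Aset k a 1)) \<le> real k / real d"
    and cardm: "real k / (4 * real d) \<le> real (card (W0set k W0 d ob 2 \<inter> Aset k a (-1)))"
               "real (card (W0set k W0 d ob 2 \<inter> Aset k a (-1))) \<le> real k / real d"
    and Sp: "real (card {x. (x, 1) \<in> S1}) \<ge> real (card S1) / 3"
    and Sm: "real (card {x. (x, -1) \<in> S1}) \<ge> real (card S1) / 3"
  shows "(\<forall>(x, y)\<in>(supportD ob d :: (('n \<Rightarrow> 'a) \<times> real) set).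
            y * (\<Sum>i\<in>{1..k}. vstar k d eta1 T1 (W0set k W0 d ob 1 \<inter> Aset k a 1)
                                   (W0set k W0 d ob 2 \<inter> Aset k a (-1)) i
                              * neuron (gd sel k S1 eta1 W0 a T1 i) x) > 1)
       \<and> (\<Sum>i\<in>{1..k}. (vstar k d eta1 T1 (W0set k W0 d ob 1 \<inter> Aset k a 1)
                                   (W0set k W0 d ob 2 \<inter> Aset k a (-1)) i)^2)
           \<le> 2 * 80^2 * real d / (real k * eta1^2 * real T1^2)"
proof -
  interpret S: setting ob d k T1 S1 sel W0 a eta1 r
    using d3 orth sel_max S1_fin S1_ne S1_supp init_norm init_a T1 eta1 r
    by unfold_locales auto
  have P1: "W0set k W0 d ob 1 \<inter> Aset k a 1 = S.Pc 1" unfolding S.Pc_def S.sg_def by simp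
  have P2: "W0set k W0 d ob 2 \<inter> Aset k a (-1) = S.Pc 2" unfolding S.Pc_def S.sg_def by simp
  have c1: "real (card {x. (x, S.sg 1) \<in> S1}) \<ge> S.m / 3" using Sp unfolding S.sg_def S.m_def by simp
  have c2: "real (card {x. (x, S.sg 2) \<in> S1}) \<ge> S.m / 3" using Sm unfolding S.sg_def S.m_def by simp
  define V where "V = 80 * real d / (real k * eta1 * real T1)"
  have A: "y * (\<Sum>i\<in>{1..k}. vstar k d eta1 T1 (S.Pc 1) (S.Pc 2) i * neuron (S.W T1 i) x) > 1"
    if s: "(x, y) \<in> supportD ob d" for x y
  proof -
    have e: "(\<Sum>i\<in>{1..k}. vstar k d eta1 T1 (S.Pc 1) (S.Pc 2) i * neuron (S.W T1 i) x)
      = V * (\<Sum>i\<in>S.Pc 1. neuron (S.W T1 i) x) - V * (\<Sum>i\<in>S.Pc 2. neuron (S.W T1 i) x)"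
      unfolding V_def by (rule S.vsum)
    have y: "y = 1 \<or> y = -1" using S.supp_struct[OF s] by auto
    then show ?thesis
    proof
      assume y1: "y = 1"
      have "S.cy y = 1" using y1 unfolding S.cy_def by simp
      from S.margin[of 1 2, OF _ _ _ c1 c2 _ _ s this] cardp(1) cardm(2) P1 P2
      show ?thesis unfolding e y1 V_def by simp
    next
      assume y1: "y = -1"
      have "S.cy y = 2" using y1 unfolding S.cy_def by simp
      from S.margin[of 2 1, OF _ _ _ c2 c1 _ _ s this] cardp(2) cardm(1) P1 P2
      show ?thesis unfolding e y1 V_def by simp
    qed
  qed
  have B: "(\<Sum>i\<in>{1..k}. (vstar k d eta1 T1 (S.Pc 1) (S.Pc 2) i)^2)
           \<le> 2 * 80^2 * real d / (real k * eta1^2 * real T1^2)"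
  proof -
    have dpos: "real d > 0" using d3 by simp
    have kpos: "real k > 0" using S.k_pos by simp
    have Tpos: "real T1 \<ge> 1" using T1 by simp
    have "real (card (S.Pc 1)) + real (card (S.Pc 2)) \<le> 2 * (real k / real d)"
      using cardp(2) cardm(2) P1 P2 by simp
    then have "V^2 * (real (card (S.Pc 1)) + real (card (S.Pc 2))) \<le> V^2 * (2 * (real k / real d))"
      by (intro mult_left_mono) auto
    also have "V^2 * (2 * (real k / real d)) = 2 * 80^2 * real d / (real k * eta1^2 * real T1^2)"
      unfolding V_def using dpos kpos S.eta_pos Tpos by (simp add: field_simps power2_eq_square)
    finally show ?thesis using S.vsq unfolding V_def by simp
  qed
  show ?thesis unfolding P1 P2 using A B by auto
qed

end
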